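(* Let $\beta=(\beta_{ij})_{i,j\ge 0,\ i+j\le 6}$ be a real sequence such that $\mathcal M(3)(\beta)$ is positive semidefinite, $\mathcal M(2)(\beta)$ is positive definite, and $\operatorname{rank}\mathcal M(3)=\operatorname{card}\mathcal V=8$, where $\mathcal V=\{(x_1,y_1),\dots,(x_8,y_8)\}$ is the algebraic variety of $\mathcal M(3)$. Suppose the columns $\mathfrak B_1=\{1,X,Y,X^2,XY,Y^2,X^3,X^2Y\}$ form a basis of the column space of $\mathcal M(3)$. Then $\beta$ has a representing measure if and only if $\mathcal M(3)$ is weakly consistent and, for all $i,j\ge 0$ with $0\le i+j\le 2$, $$\Lambda_\beta\big(x^iy^j(x^4-a_0-a_1x-a_2y-a_3x^2-a_4xy-a_5y^2-a_6x^3-a_7x^2y)\big)=0$$ and $$\Lambda_\beta\big(x^iy^j(x^3y-b_0-b_1x-b_2y-b_3x^2-b_4xy-b_5y^2-b_6x^3-b_7x^2y)\big)=0,$$ where $(a_0,\dots,a_7)^T=W_{\mathfrak B_1}^{-1}(x_1^4,\dots,x_8^4)^T$ and $(b_0,\dots,b_7)^T=W_{\mathfrak B_1}^{-1}(x_1^3y_1,\dots,x_8^3y_8)^T$.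
   Context: The moment matrix $\mathcal M(3)(\beta)$ has rows and columns indexed by $1,X,Y,X^2,XY,Y^2,X^3,X^2Y,XY^2,Y^3$ in this order, with entry $\beta_{i+k,j+l}$ in row $X^iY^j$ and column $X^kY^l$; $\mathcal M(2)(\beta)$ is its principal submatrix indexed by monomials of degree $\le 2$. For $p(x,y)=\sum a_{ij}x^iy^j$ of degree $\le 3$, $p(X,Y)=\sum a_{ij}X^iY^j$ is the corresponding linear combination of columns. The algebraic variety is $\mathcal V=\bigcap\{\mathcal Z(p):\deg p\le 3,\ p(X,Y)=\mathbf 0\}$ with $\mathcal Z(p)$ the real zero set of $p$. The Riesz functional $\Lambda_\beta$ on polynomials of degree $\le 6$ is $\Lambda_\beta(\sum a_{ij}x^iy^j)=\sum a_{ij}\beta_{ij}$. A representing measure is a positive Borel measure $\mu$ on $\mathbb R^2$ with $\beta_{ij}=\int x^iy^j\,d\mu$ for $i+j\le 6$. $\mathcal M(3)$ is weakly consistent if every polynomial $p$ of degree $\le 3$ vanishing on $\mathcal V$ satisfies $p(X,Y)=\mathbf 0$. The generalized Vandermonde matrix $W$ is the $8\times 10$ matrix whose $k$-th row is $(1,x_k,y_k,x_k^2,x_ky_k,y_k^2,x_k^3,x_k^2y_k,x_ky_k^2,y_k^3)$, with columns labeled $1,X,Y,\dots,Y^3$; for a set $\mathcal B$ of column labels, $W_{\mathcal B}$ is the square submatrix of $W$ formed by the columns in $\mathcal B$ (in the listed order). *)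

theory Defs
  imports "HOL-Analysis.Analysis" "Jordan_Normal_Form.DL_Rank" "Jordan_Normal_Form.Gauss_Jordan_Elimination"
begin

text \<open>Monomials of degree at most 3, in the order 1,X,Y,X^2,XY,Y^2,X^3,X^2Y,XY^2,Y^3,
  encoded as exponent pairs (i,j) for x^i y^j.\<close>
definition mons :: "(nat \<times> nat) list" where
  "mons = [(0,0),(1,0),(0,1),(2,0),(1,1),(0,2),(3,0),(2,1),(1,2),(0,3)]"

text \<open>Moment matrix: principal n x n submatrix of M(3)(beta); n = 10 gives M(3), n = 6 gives M(2).\<close>
definition moment_mat :: "(nat \<Rightarrow> nat \<Rightarrow> real) \<Rightarrow> nat \<Rightarrow> real Matrix.mat" where
  "moment_mat \<beta> n = Matrix.mat n n (\<lambda>(r,c).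
     \<beta> (fst (mons!r) + fst (mons!c)) (snd (mons!r) + snd (mons!c)))"

abbreviation M3 :: "(nat \<Rightarrow> nat \<Rightarrow> real) \<Rightarrow> real Matrix.mat" where "M3 \<beta> \<equiv> moment_mat \<beta> 10"
abbreviation M2 :: "(nat \<Rightarrow> nat \<Rightarrow> real) \<Rightarrow> real Matrix.mat" where "M2 \<beta> \<equiv> moment_mat \<beta> 6"

definition psd_mat :: "nat \<Rightarrow> real Matrix.mat \<Rightarrow> bool" where
  "psd_mat n A \<longleftrightarrow> A \<in> carrier_mat n n \<and> A = transpose_mat A \<and>
     (\<forall>v \<in> carrier_vec n. v \<bullet> (A *\<^sub>v v) \<ge> 0)"

definition pd_mat :: "nat \<Rightarrow> real Matrix.mat \<Rightarrow> bool" where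
  "pd_mat n A \<longleftrightarrow> A \<in> carrier_mat n n \<and> A = transpose_mat A \<and>
     (\<forall>v \<in> carrier_vec n. v \<noteq> 0\<^sub>v n \<longrightarrow> v \<bullet> (A *\<^sub>v v) > 0)"

text \<open>A polynomial p of degree at most 3 is given by its coefficient vector a (indexed as mons);
  p(X,Y) is then the column combination M(3) *v a, and peval a x y = p(x,y).\<close>
definition peval :: "real Matrix.vec \<Rightarrow> real \<Rightarrow> real \<Rightarrow> real" where
  "peval a x y = (\<Sum>k<10. a $ k * x ^ fst (mons!k) * y ^ snd (mons!k))"

definition variety :: "(nat \<Rightarrow> nat \<Rightarrow> real) \<Rightarrow> (real \<times> real) set" where
  "variety \<beta> = {(x,y). \<forall>a \<in> carrier_vec 10. M3 \<beta> *\<^sub>v a = 0\<^sub>v 10 \<longrightarrow> peval a x y = 0}"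

definition weakly_consistent :: "(nat \<Rightarrow> nat \<Rightarrow> real) \<Rightarrow> bool" where
  "weakly_consistent \<beta> \<longleftrightarrow> (\<forall>a \<in> carrier_vec 10.
     (\<forall>(x,y) \<in> variety \<beta>. peval a x y = 0) \<longrightarrow> M3 \<beta> *\<^sub>v a = 0\<^sub>v 10)"

text \<open>Riesz functional on polynomials of degree at most 6, given by coefficient functions c i j of x^i y^j.\<close>
definition riesz :: "(nat \<Rightarrow> nat \<Rightarrow> real) \<Rightarrow> (nat \<Rightarrow> nat \<Rightarrow> real) \<Rightarrow> real" where
  "riesz \<beta> c = (\<Sum>i\<le>6. \<Sum>j\<le>6 - i. c i j * \<beta> i j)"

definition mono_times :: "nat \<Rightarrow> nat \<Rightarrow> (nat \<Rightarrow> nat \<Rightarrow> real) \<Rightarrow> (nat \<Rightarrow> nat \<Rightarrow> real)" where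
  "mono_times i j c = (\<lambda>u v. if i \<le> u \<and> j \<le> v then c (u - i) (v - j) else 0)"

text \<open>Coefficients of x^s y^t - sum_{k<8} c_k m_k, with m_k the k-th monomial of B1.\<close>
definition resid_poly :: "nat \<times> nat \<Rightarrow> real Matrix.vec \<Rightarrow> (nat \<Rightarrow> nat \<Rightarrow> real)" where
  "resid_poly st c = (\<lambda>u v. (if (u,v) = st then 1 else 0) - (\<Sum>k<8. if mons!k = (u,v) then c $ k else 0))"

text \<open>Generalized Vandermonde matrix W (8 x 10) and its submatrix W_B1 for
  B1 = {1,X,Y,X^2,XY,Y^2,X^3,X^2Y} (the first 8 columns).\<close>
definition vandermonde :: "(real \<times> real) list \<Rightarrow> real Matrix.mat" where
  "vandermonde pts = Matrix.mat 8 10 (\<lambda>(k,l). fst (pts!k) ^ fst (mons!l) * snd (pts!k) ^ snd (mons!l))"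

definition W_B1 :: "(real \<times> real) list \<Rightarrow> real Matrix.mat" where
  "W_B1 pts = Matrix.mat 8 8 (\<lambda>(k,l). vandermonde pts $$ (k,l))"

definition has_rep_measure :: "(nat \<Rightarrow> nat \<Rightarrow> real) \<Rightarrow> bool" where
  "has_rep_measure \<beta> \<longleftrightarrow> (\<exists>\<mu> :: (real \<times> real) measure. sets \<mu> = sets borel \<and>
     (\<forall>i j. i + j \<le> 6 \<longrightarrow> integrable \<mu> (\<lambda>p. fst p ^ i * snd p ^ j) \<and>
        (\<integral>p. fst p ^ i * snd p ^ j \<partial>\<mu>) = \<beta> i j))"

end

theory Submission
  imports Defs
begin

no_notation Finite_Cartesian_Product.vec_nth (infixl "$" 90)

lemma M3_carrier: "M3 \<beta> \<in> carrier_mat 10 10"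
  unfolding moment_mat_def by simp

lemma dimM3[simp]: "dim_row (M3 \<beta>) = 10" "dim_col (M3 \<beta>) = 10"
  by (simp_all add: moment_mat_def)

lemma M3_entry: "r < 10 \<Longrightarrow> c < 10 \<Longrightarrow> M3 \<beta> $$ (r,c) =
   \<beta> (fst (mons!r) + fst (mons!c)) (snd (mons!r) + snd (mons!c))"
  unfolding moment_mat_def by simp

lemma M3_mult: "r < 10 \<Longrightarrow> a \<in> carrier_vec 10 \<Longrightarrow> (M3 \<beta> *\<^sub>v a) $ r =
   (\<Sum>c<10. \<beta> (fst (mons!r) + fst (mons!c)) (snd (mons!r) + snd (mons!c)) * a $ c)"
  unfolding moment_mat_def mult_mat_vec_def scalar_prod_def
  by (auto intro!: sum.cong simp: lessThan_atLeast0)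

definition ws8 :: "(nat \<Rightarrow> nat \<Rightarrow> real) \<Rightarrow> real vec list" where
  "ws8 \<beta> = map (col (M3 \<beta>)) [0..<8]"

lemma ws8_carrier: "set (ws8 \<beta>) \<subseteq> carrier_vec 10"
  unfolding ws8_def by (auto simp: col_def moment_mat_def)

lemma matcols_mult: assumes "r < 10"
  shows "(mat_of_cols 10 (ws8 \<beta>) *\<^sub>v vec 8 f) $ r = (\<Sum>i<8. M3 \<beta> $$ (r,i) * f i)"
  using assms unfolding mat_of_cols_def mult_mat_vec_def scalar_prod_def ws8_def
  by (auto intro!: sum.cong simp: lessThan_atLeast0 moment_mat_def)

lemma lincomb_ws8: 
  "module.lincomb (module_vec TYPE(real) 10) f (set (ws8 \<beta>)) = mat_of_cols 10 (ws8 \<beta>) *\<^sub>v Matrix.vec 8 (\<lambda>i. f (ws8 \<beta> ! i))"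
  if "distinct (ws8 \<beta>)"
proof -
  interpret vec_space "TYPE(real)" 10 .
  have "lincomb f (set (ws8 \<beta>)) = lincomb_list (\<lambda>i. f (ws8 \<beta> ! i)) (ws8 \<beta>)"
    by (rule lincomb_as_lincomb_list_distinct[OF ws8_carrier that])
  also have "\<dots> = mat_of_cols 10 (ws8 \<beta>) *\<^sub>v Matrix.vec 8 (\<lambda>i. f (ws8 \<beta> ! i))"
    by (rule trans[OF lincomb_list_as_mat_mult], auto simp: ws8_def moment_mat_def)
  finally show ?thesis .
qed

lemma sum10: "(\<Sum>i<10::nat. g i) = (\<Sum>i<8. g i) + g 8 + (g 9 :: 'a::comm_monoid_add)"
proof -
  have "{..<10::nat} = {..<8} \<union> {8,9}" by auto
  then show ?thesis by (simp add: sum.union_disjoint ac_simps)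
qed

lemma mat_mult10: "A \<in> carrier_mat 10 10 \<Longrightarrow> c \<in> carrier_vec 10 \<Longrightarrow> r < 10 \<Longrightarrow>
   (A *\<^sub>v c) $ r = (\<Sum>i<10. A $$ (r,i) * c $ i)"
  unfolding mult_mat_vec_def scalar_prod_def
  by (auto intro!: sum.cong simp: lessThan_atLeast0)

lemma len_ws8[simp]: "length (ws8 \<beta>) = 8" by (simp add: ws8_def)
lemma nth_ws8: "i < 8 \<Longrightarrow> ws8 \<beta> ! i = col (M3 \<beta>) i" by (simp add: ws8_def)

lemma indep8:
  assumes LI: "module.lin_indpt class_ring (module_vec TYPE(real) 10) (set (ws8 \<beta>))"
    and D: "distinct (ws8 \<beta>)"
    and c: "c \<in> carrier_vec 10" "c $ 8 = 0" "c $ 9 = 0" "M3 \<beta> *\<^sub>v c = 0\<^sub>v 10"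
  shows "c = 0\<^sub>v 10"
proof -
  interpret vec_space "TYPE(real)" 10 .
  define f where "f v = c $ (inv_into {..<8} (\<lambda>i. ws8 \<beta> ! i) v)" for v
  have inj: "inj_on (\<lambda>i. ws8 \<beta> ! i) {..<8}" using D by (simp add: inj_on_def nth_eq_iff_index_eq)
  have fi: "f (ws8 \<beta> ! i) = c $ i" if "i<8" for i using that by (simp add: f_def inv_into_f_f[OF inj])
  have "lincomb f (set (ws8 \<beta>)) = mat_of_cols 10 (ws8 \<beta>) *\<^sub>v Matrix.vec 8 (\<lambda>i. f (ws8 \<beta> ! i))"
    by (rule lincomb_ws8[OF D])
  also have "\<dots> = 0\<^sub>v 10"
  proof (rule eq_vecI)
    fix r assume r: "r < dim_vec (0\<^sub>v 10 :: real vec)"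
    then have r10: "r < 10" by simp
    have "(mat_of_cols 10 (ws8 \<beta>) *\<^sub>v Matrix.vec 8 (\<lambda>i. f (ws8 \<beta> ! i))) $ r = (\<Sum>i<8. M3 \<beta> $$ (r,i) * c $ i)"
      using matcols_mult[OF r10] fi by simp
    also have "\<dots> = (M3 \<beta> *\<^sub>v c) $ r"
      using mat_mult10[OF M3_carrier c(1) r10] c(2,3) by (simp add: sum10)
    finally show "(mat_of_cols 10 (ws8 \<beta>) *\<^sub>v Matrix.vec 8 (\<lambda>i. f (ws8 \<beta> ! i))) $ r = 0\<^sub>v 10 $ r"
      using c(4) r10 by simp
  qed simp
  finally have lc: "lincomb f (set (ws8 \<beta>)) = 0\<^sub>v 10" .
  have "f \<in> set (ws8 \<beta>) \<rightarrow> {0}"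
    using not_lindepD[OF LI finite_set subset_refl _ lc] by simp
  have z: "c $ i = 0" if "i < 8" for i
  proof -
    have "ws8 \<beta> ! i \<in> set (ws8 \<beta>)" using that by simp
    with \<open>f \<in> set (ws8 \<beta>) \<rightarrow> {0}\<close> have "f (ws8 \<beta> ! i) = 0" by auto
    then show ?thesis using fi[OF that] by simp
  qed
  show ?thesis
  proof (rule eq_vecI)
    fix i assume "i < dim_vec (0\<^sub>v 10 :: real vec)"
    then have "i < 8 \<or> i = 8 \<or> i = 9" by auto
    then show "c $ i = 0\<^sub>v 10 $ i" using z c by auto
  qed (use c in auto)
qed

lemma kernel_vec:
  assumes SP: "module.span class_ring (module_vec TYPE(real) 10) (set (ws8 \<beta>)) = vec_space.col_space 10 (M3 \<beta>)"
    and D: "distinct (ws8 \<beta>)" and t: "8 \<le> t" "t < 10"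
  shows "\<exists>k \<in> carrier_vec 10. M3 \<beta> *\<^sub>v k = 0\<^sub>v 10 \<and> k $ t = 1 \<and>
     (\<forall>s. 8 \<le> s \<and> s < 10 \<and> s \<noteq> t \<longrightarrow> k $ s = 0)"
proof -
  interpret vec_space "TYPE(real)" 10 .
  have "col (M3 \<beta>) t \<in> set (cols (M3 \<beta>))" using t by (simp add: cols_def moment_mat_def)
  moreover have "set (cols (M3 \<beta>)) \<subseteq> carrier_vec 10" by (auto simp: cols_def moment_mat_def col_def)
  ultimately have "col (M3 \<beta>) t \<in> col_space (M3 \<beta>)" unfolding col_space_def by (rule span_mem[rotated])
  then have "col (M3 \<beta>) t \<in> span (set (ws8 \<beta>))" using SP by simp
  from finite_in_span[OF finite_set ws8_carrier this] obtain a where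
    a: "lincomb a (set (ws8 \<beta>)) = col (M3 \<beta>) t" by auto
  then have a2: "mat_of_cols 10 (ws8 \<beta>) *\<^sub>v Matrix.vec 8 (\<lambda>i. a (ws8 \<beta> ! i)) = col (M3 \<beta>) t"
    using lincomb_ws8[OF D] by simp
  define k where "k = Matrix.vec 10 (\<lambda>i. if i < 8 then - a (ws8 \<beta> ! i) else if i = t then 1 else (0::real))"
  have kc: "k \<in> carrier_vec 10" by (simp add: k_def)
  have "M3 \<beta> *\<^sub>v k = 0\<^sub>v 10"
  proof (rule eq_vecI)
    fix r assume r: "r < dim_vec (0\<^sub>v 10 :: real vec)"
    then have r10: "r < 10" by simp
    have "(M3 \<beta> *\<^sub>v k) $ r = (\<Sum>i<8. M3 \<beta> $$ (r,i) * k $ i) + M3 \<beta> $$ (r,8) * k $ 8 + M3 \<beta> $$ (r,9) * k $ 9"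
      using mat_mult10[OF M3_carrier kc r10] by (simp add: sum10)
    also have "\<dots> = - (\<Sum>i<8. M3 \<beta> $$ (r,i) * a (ws8 \<beta> ! i)) + M3 \<beta> $$ (r,t)"
      using t by (cases "t = 8") (auto simp: k_def sum_negf intro!: arg_cong[where f="\<lambda>t. M3 \<beta> $$ (r,t)"])
    also have "(\<Sum>i<8. M3 \<beta> $$ (r,i) * a (ws8 \<beta> ! i)) = col (M3 \<beta>) t $ r"
      using matcols_mult[OF r10, of \<beta> "\<lambda>i. a (ws8 \<beta> ! i)"] a2 by simp
    also have "col (M3 \<beta>) t $ r = M3 \<beta> $$ (r,t)" using r10 t by (simp add: moment_mat_def)
    finally show "(M3 \<beta> *\<^sub>v k) $ r = 0\<^sub>v 10 $ r" using r10 by simp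
  qed (simp add: moment_mat_def)
  then show ?thesis using kc t by (intro bexI[of _ k]) (auto simp: k_def)
qed

lemma less10: "k < (10::nat) \<Longrightarrow> k = 0 \<or> k = 1 \<or> k = 2 \<or> k = 3 \<or> k = 4 \<or> k = 5 \<or> k = 6 \<or> k = 7 \<or> k = 8 \<or> k = 9"
  by auto

lemma mons_deg: "k < 10 \<Longrightarrow> fst (mons!k) + snd (mons!k) \<le> 3"
  using less10[of k] by (auto simp: mons_def)

lemma mons_deg8: "k < 8 \<Longrightarrow> fst (mons!k) + snd (mons!k) \<le> 3 \<and> (fst (mons!k) + snd (mons!k) = 3 \<longrightarrow> snd (mons!k) \<le> 1)"
  using less10[of k] by (auto simp: mons_def)

lemma mons_89: "mons!8 = (1,2)" "mons!9 = (0,3)" by (simp_all add: mons_def)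

lemma mons_surj: "i + j \<le> 3 \<Longrightarrow> \<exists>s<10. mons!s = (i,j)"
proof -
  assume a: "i + j \<le> 3"
  then have "(i,j) \<in> set mons" unfolding mons_def
    by (cases i; cases j) (auto simp: eval_nat_numeral le_Suc_eq)
  then obtain s where "s < length mons" "mons!s = (i,j)" by (auto simp: in_set_conv_nth)
  moreover have "length mons = 10" by (simp add: mons_def)
  ultimately show ?thesis by auto
qed

definition mon :: "nat \<Rightarrow> real \<Rightarrow> real \<Rightarrow> real" where
  "mon k x y = x ^ fst (mons!k) * y ^ snd (mons!k)"

lemma peval_mon: "peval a x y = (\<Sum>k<10. a $ k * mon k x y)"
  unfolding peval_def mon_def by (simp add: mult.assoc)

definition atomic :: "(nat \<Rightarrow> nat \<Rightarrow> real) \<Rightarrow> (real \<times> real) list \<Rightarrow> (nat \<Rightarrow> real) \<Rightarrow> bool" where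
  "atomic \<beta> pts \<rho> \<longleftrightarrow> (\<forall>u v. u + v \<le> 6 \<longrightarrow> \<beta> u v = (\<Sum>l<8. \<rho> l * fst (pts!l) ^ u * snd (pts!l) ^ v))"

lemma atomic_M3:
  assumes at: "atomic \<beta> pts \<rho>" and a: "a \<in> carrier_vec 10" and s: "s < 10"
  shows "(M3 \<beta> *\<^sub>v a) $ s = (\<Sum>l<8. \<rho> l * mon s (fst (pts!l)) (snd (pts!l)) * peval a (fst (pts!l)) (snd (pts!l)))"
proof -
  have "(M3 \<beta> *\<^sub>v a) $ s = (\<Sum>c<10. \<beta> (fst (mons!s) + fst (mons!c)) (snd (mons!s) + snd (mons!c)) * a $ c)"
    by (rule M3_mult[OF s a])
  also have "\<dots> = (\<Sum>c<10. (\<Sum>l<8. \<rho> l * fst (pts!l) ^ (fst (mons!s) + fst (mons!c)) * snd (pts!l) ^ (snd (mons!s) + snd (mons!c))) * a $ c)"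
  proof (intro sum.cong refl)
    fix c assume "c \<in> {..<10::nat}"
    then have "fst (mons!s) + fst (mons!c) + (snd (mons!s) + snd (mons!c)) \<le> 6"
      using mons_deg[of s] mons_deg[of c] s by auto
    then show "\<beta> (fst (mons!s) + fst (mons!c)) (snd (mons!s) + snd (mons!c)) * a $ c =
      (\<Sum>l<8. \<rho> l * fst (pts!l) ^ (fst (mons!s) + fst (mons!c)) * snd (pts!l) ^ (snd (mons!s) + snd (mons!c))) * a $ c"
      using at unfolding atomic_def by simp
  qed
  also have "\<dots> = (\<Sum>l<8. \<Sum>c<10. \<rho> l * mon s (fst (pts!l)) (snd (pts!l)) * (a $ c * mon c (fst (pts!l)) (snd (pts!l))))"
    unfolding sum_distrib_right by (subst sum.swap) (simp add: mon_def power_add ac_simps)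
  also have "\<dots> = (\<Sum>l<8. \<rho> l * mon s (fst (pts!l)) (snd (pts!l)) * peval a (fst (pts!l)) (snd (pts!l)))"
    unfolding peval_mon sum_distrib_left by simp
  finally show ?thesis .
qed

lemma atomic_quad:
  assumes at: "atomic \<beta> pts \<rho>" and a: "a \<in> carrier_vec 10"
  shows "a \<bullet> (M3 \<beta> *\<^sub>v a) = (\<Sum>l<8. \<rho> l * (peval a (fst (pts!l)) (snd (pts!l)))^2)"
proof -
  have "a \<bullet> (M3 \<beta> *\<^sub>v a) = (\<Sum>s<10. a $ s * (M3 \<beta> *\<^sub>v a) $ s)"
    using a by (simp add: scalar_prod_def lessThan_atLeast0 del: index_mult_mat_vec)
  also have "\<dots> = (\<Sum>s<10. a $ s * (\<Sum>l<8. \<rho> l * mon s (fst (pts!l)) (snd (pts!l)) * peval a (fst (pts!l)) (snd (pts!l))))"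
    using atomic_M3[OF at a] by simp
  also have "\<dots> = (\<Sum>l<8. \<rho> l * peval a (fst (pts!l)) (snd (pts!l)) * (\<Sum>s<10. a $ s * mon s (fst (pts!l)) (snd (pts!l))))"
    unfolding sum_distrib_left by (subst sum.swap) (simp add: ac_simps)
  also have "\<dots> = (\<Sum>l<8. \<rho> l * (peval a (fst (pts!l)) (snd (pts!l)))^2)"
    unfolding peval_mon[symmetric] by (simp add: power2_eq_square ac_simps)
  finally show ?thesis .
qed

definition Dl :: "nat \<times> nat \<Rightarrow> nat \<Rightarrow> nat \<Rightarrow> real" where
  "Dl P u v = (if (u,v) = P then 1 else 0)"

lemma riesz_diff: "riesz \<beta> (\<lambda>u v. f u v - g u v) = riesz \<beta> f - riesz \<beta> g"
  unfolding riesz_def by (simp add: left_diff_distrib sum_subtractf)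

lemma riesz_sum: "riesz \<beta> (\<lambda>u v. \<Sum>k\<in>K. h k u v) = (\<Sum>k\<in>K. riesz \<beta> (h k))"
proof -
  have "riesz \<beta> (\<lambda>u v. \<Sum>k\<in>K. h k u v) = (\<Sum>i\<le>6. \<Sum>j\<le>6 - i. \<Sum>k\<in>K. h k i j * \<beta> i j)"
    unfolding riesz_def sum_distrib_right by simp
  also have "\<dots> = (\<Sum>i\<le>6. \<Sum>k\<in>K. \<Sum>j\<le>6 - i. h k i j * \<beta> i j)"
    by (rule sum.cong[OF refl], rule sum.swap)
  also have "\<dots> = (\<Sum>k\<in>K. \<Sum>i\<le>6. \<Sum>j\<le>6 - i. h k i j * \<beta> i j)"
    by (rule sum.swap)
  finally show ?thesis unfolding riesz_def .
qed

lemma riesz_scale: "riesz \<beta> (\<lambda>u v. c * f u v) = c * riesz \<beta> f"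
  unfolding riesz_def sum_distrib_left by (simp add: ac_simps)

lemma riesz_delta: assumes "fst P + snd P \<le> 6" shows "riesz \<beta> (Dl P) = \<beta> (fst P) (snd P)"
proof -
  obtain p q where P: "P = (p,q)" by (cases P)
  have "riesz \<beta> (Dl P) = (\<Sum>i\<le>6. if i = p then \<beta> p q else 0)"
    unfolding riesz_def
  proof (rule sum.cong[OF refl])
    fix i assume "i \<in> {..6::nat}"
    show "(\<Sum>j\<le>6 - i. Dl P i j * \<beta> i j) = (if i = p then \<beta> p q else 0)"
    proof (cases "i = p")
      case True
      have "(\<Sum>j\<le>6 - i. Dl P i j * \<beta> i j) = (\<Sum>j\<le>6 - i. if j = q then \<beta> p q else 0)"
        using True P by (intro sum.cong) (auto simp: Dl_def)
      also have "\<dots> = \<beta> p q" using assms P True by simp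
      finally show ?thesis using True by simp
    qed (auto simp: Dl_def P)
  qed
  also have "\<dots> = \<beta> p q" using assms P by simp
  finally show ?thesis using P by simp
qed

lemma mt_resid: "mono_times i j (resid_poly st a) =
  (\<lambda>u v. Dl (fst st + i, snd st + j) u v - (\<Sum>k<8. a $ k * Dl (fst (mons!k) + i, snd (mons!k) + j) u v))"
proof (intro ext)
  fix u v
  show "mono_times i j (resid_poly st a) u v =
    Dl (fst st + i, snd st + j) u v - (\<Sum>k<8. a $ k * Dl (fst (mons!k) + i, snd (mons!k) + j) u v)"
  proof (cases "i \<le> u \<and> j \<le> v")
    case True
    have e1: "((u - i, v - j) = st) = ((u,v) = (fst st + i, snd st + j))" using True by (cases st) auto
    have e2: "(mons!k = (u - i, v - j)) = ((u,v) = (fst (mons!k) + i, snd (mons!k) + j))" for k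
      using True by (cases "mons!k") auto
    show ?thesis using True unfolding mono_times_def resid_poly_def Dl_def
      by (simp add: e1 e2[symmetric] if_distrib[of "\<lambda>x. _ * x"] cong: if_cong) (auto intro!: sum.cong)
  next
    case False
    then show ?thesis unfolding mono_times_def Dl_def by auto
  qed
qed

lemma riesz_resid:
  assumes "fst st + snd st + i + j \<le> 6" "i + j \<le> 3"
  shows "riesz \<beta> (mono_times i j (resid_poly st a)) =
    \<beta> (fst st + i) (snd st + j) - (\<Sum>k<8. a $ k * \<beta> (fst (mons!k) + i) (snd (mons!k) + j))"
proof -
  have "riesz \<beta> (mono_times i j (resid_poly st a)) = riesz \<beta> (Dl (fst st + i, snd st + j)) -
     (\<Sum>k<8. a $ k * riesz \<beta> (Dl (fst (mons!k) + i, snd (mons!k) + j)))"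
    unfolding mt_resid riesz_diff riesz_sum riesz_scale by simp
  also have "\<dots> = \<beta> (fst st + i) (snd st + j) - (\<Sum>k<8. a $ k * \<beta> (fst (mons!k) + i) (snd (mons!k) + j))"
  proof -
    have "riesz \<beta> (Dl (fst (mons!k) + i, snd (mons!k) + j)) = \<beta> (fst (mons!k) + i) (snd (mons!k) + j)" if "k < 8" for k
      using mons_deg8[OF that] assms by (subst riesz_delta) auto
    then show ?thesis using assms by (simp add: riesz_delta)
  qed
  finally show ?thesis .
qed

lemma take8: "(u,v) \<in> set (take 8 mons) \<Longrightarrow> \<exists>k<8. mons!k = (u,v)"
proof -
  assume "(u,v) \<in> set (take 8 mons)"
  then obtain k where "k < length (take 8 mons)" "take 8 mons ! k = (u,v)" by (auto simp: in_set_conv_nth)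
  moreover have "length mons = 10" by (simp add: mons_def)
  ultimately show ?thesis by auto
qed

lemma reduction:
  fixes w :: "nat \<Rightarrow> nat \<Rightarrow> real" and k1 k2 a b :: "real vec"
  assumes K1: "\<And>i j. i + j \<le> 3 \<Longrightarrow> (\<Sum>r<10. k1 $ r * w (fst (mons!r) + i) (snd (mons!r) + j)) = 0"
    and K2: "\<And>i j. i + j \<le> 3 \<Longrightarrow> (\<Sum>r<10. k2 $ r * w (fst (mons!r) + i) (snd (mons!r) + j)) = 0"
    and k1: "k1 $ 8 = 1" "k1 $ 9 = 0" and k2: "k2 $ 8 = 0" "k2 $ 9 = 1"
    and A: "\<And>i j. i + j \<le> 2 \<Longrightarrow> w (4 + i) j = (\<Sum>k<8. a $ k * w (fst (mons!k) + i) (snd (mons!k) + j))"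
    and B: "\<And>i j. i + j \<le> 2 \<Longrightarrow> w (3 + i) (1 + j) = (\<Sum>k<8. b $ k * w (fst (mons!k) + i) (snd (mons!k) + j))"
    and Z: "\<And>k. k < 8 \<Longrightarrow> w (fst (mons!k)) (snd (mons!k)) = 0"
  shows "u + v \<le> 6 \<Longrightarrow> w u v = 0"
proof -
  assume uv0: "u + v \<le> 6"
  have "\<forall>u v. 10 * (u + v) + v = n \<longrightarrow> u + v \<le> 6 \<longrightarrow> w u v = 0" for n
  proof (induction n rule: less_induct)
    case (less n)
    show ?case
    proof (intro allI impI)
  fix u v assume nuv: "10 * (u + v) + v = n" and prems: "u + v \<le> 6"
  have IH: "w u' v' = 0" if "10 * (u' + v') + v' < 10 * (u + v) + v" "u' + v' \<le> 6" for u' v'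
    using less.IH[of "10 * (u' + v') + v'"] that nuv by auto
  have low: "(\<Sum>k<8. c k * w (fst (mons!k) + i) (snd (mons!k) + j)) = 0"
    if "\<And>k. k < 8 \<Longrightarrow> 10 * (fst (mons!k) + i + (snd (mons!k) + j)) + (snd (mons!k) + j) < 10 * (u + v) + v
       \<and> fst (mons!k) + i + (snd (mons!k) + j) \<le> 6" for c i j
  proof (intro sum.neutral ballI)
    fix k assume "k \<in> {..<8::nat}"
    then have "k < 8" by simp
    from that[OF this] have "w (fst (mons!k) + i) (snd (mons!k) + j) = 0" by (intro IH) auto
    then show "c k * w (fst (mons!k) + i) (snd (mons!k) + j) = 0" by simp
  qed
  have "(1 \<le> u \<and> 2 \<le> v) \<or> (u = 0 \<and> 3 \<le> v) \<or> (v = 0 \<and> 4 \<le> u) \<or> (v = 1 \<and> 3 \<le> u) \<or>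
     ((u = 0 \<and> v = 0) \<or> (u = 1 \<and> v = 0) \<or> (u = 0 \<and> v = 1) \<or> (u = 2 \<and> v = 0) \<or> (u = 1 \<and> v = 1)
      \<or> (u = 0 \<and> v = 2) \<or> (u = 3 \<and> v = 0) \<or> (u = 2 \<and> v = 1))"
    by presburger
  then consider (c1) "1 \<le> u" "2 \<le> v" | (c2) "u = 0" "3 \<le> v" | (ca) "v = 0" "4 \<le> u" | (cb) "v = 1" "3 \<le> u"
    | (cz) "(u,v) \<in> set (take 8 mons)"
    by (auto simp: mons_def)
  then show "w u v = 0"
  proof cases
    case c1
    define i where "i = u - 1"
    define j where "j = v - 2"
    have uv: "u = 1 + i" "v = 2 + j" using c1 by (auto simp: i_def j_def)
    have ij: "i + j \<le> 3" using prems uv by auto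
    have "0 = (\<Sum>r<10. k1 $ r * w (fst (mons!r) + i) (snd (mons!r) + j))" using K1[OF ij] by simp
    also have "\<dots> = (\<Sum>r<8. k1 $ r * w (fst (mons!r) + i) (snd (mons!r) + j)) + w u v"
      by (simp add: sum10 mons_89 k1 uv)
    also have "(\<Sum>r<8. k1 $ r * w (fst (mons!r) + i) (snd (mons!r) + j)) = 0"
      by (rule low) (use mons_deg8 uv ij in fastforce)
    finally show ?thesis by simp
  next
    case c2
    define j where "j = v - 3"
    have uv: "u = 0 + 0" "v = 3 + j" using c2 by (auto simp: j_def)
    have ij: "0 + j \<le> 3" using prems uv by auto
    have "0 = (\<Sum>r<10. k2 $ r * w (fst (mons!r) + 0) (snd (mons!r) + j))" using K2[OF ij] by simp
    also have "\<dots> = (\<Sum>r<8. k2 $ r * w (fst (mons!r) + 0) (snd (mons!r) + j)) + w u v"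
      by (simp add: sum10 mons_89 k2 uv)
    also have "(\<Sum>r<8. k2 $ r * w (fst (mons!r) + 0) (snd (mons!r) + j)) = 0"
      by (rule low) (use mons_deg8 uv ij in fastforce)
    finally show ?thesis by simp
  next
    case ca
    define i where "i = u - 4"
    have uv: "u = 4 + i" "v = 0" using ca by (auto simp: i_def)
    have ij: "i + 0 \<le> 2" using prems uv by auto
    have "w u v = (\<Sum>k<8. a $ k * w (fst (mons!k) + i) (snd (mons!k) + 0))" using A[OF ij] uv by simp
    also have "\<dots> = 0"
      by (rule low) (use mons_deg8 uv ij in fastforce)
    finally show ?thesis .
  next
    case cb
    define i where "i = u - 3"
    have uv: "u = 3 + i" "v = 1 + 0" using cb by (auto simp: i_def)
    have ij: "i + 0 \<le> 2" using prems uv by auto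
    have "w u v = (\<Sum>k<8. b $ k * w (fst (mons!k) + i) (snd (mons!k) + 0))" using B[OF ij] uv by simp
    also have "\<dots> = 0"
      by (rule low) (use mons_deg8 uv ij in fastforce)
    finally show ?thesis .
  next
    case cz
    then obtain k where "k < 8" "mons!k = (u,v)" using take8 by blast
    then show ?thesis using Z[of k] by simp
  qed
    qed
  qed
  then show ?thesis using uv0 by blast
qed

lemma WB1_carrier: "W_B1 pts \<in> carrier_mat 8 8" by (simp add: W_B1_def)

lemma WB1_entry: "j < 8 \<Longrightarrow> k < 8 \<Longrightarrow> W_B1 pts $$ (j,k) = mon k (fst (pts!j)) (snd (pts!j))"
  by (simp add: W_B1_def vandermonde_def mon_def)

lemma mat_mult8: "A \<in> carrier_mat 8 8 \<Longrightarrow> c \<in> carrier_vec 8 \<Longrightarrow> r < 8 \<Longrightarrow>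
   (A *\<^sub>v c) $ r = (\<Sum>i<8. A $$ (r,i) * c $ i)"
  unfolding mult_mat_vec_def scalar_prod_def
  by (auto intro!: sum.cong simp: lessThan_atLeast0)

lemma WB1_mult: "c \<in> carrier_vec 8 \<Longrightarrow> j < 8 \<Longrightarrow>
    (W_B1 pts *\<^sub>v c) $ j = (\<Sum>k<8. c $ k * mon k (fst (pts!j)) (snd (pts!j)))"
  by (simp add: mat_mult8[OF WB1_carrier] WB1_entry mult.commute)

definition ext10 :: "real vec \<Rightarrow> real vec" where
  "ext10 c = Matrix.vec 10 (\<lambda>k. if k < 8 then c $ k else 0)"

lemma ext10_carrier: "ext10 c \<in> carrier_vec 10" by (simp add: ext10_def)

lemma peval_ext10: "peval (ext10 c) x y = (\<Sum>k<8. c $ k * mon k x y)"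
  unfolding peval_mon sum10 by (simp add: ext10_def)

lemma WB1_inj:
  assumes wc: "weakly_consistent \<beta>" and V: "set pts = variety \<beta>" and L: "length pts = 8"
    and LI: "module.lin_indpt class_ring (module_vec TYPE(real) 10) (set (ws8 \<beta>))"
    and D: "distinct (ws8 \<beta>)"
    and c: "c \<in> carrier_vec 8" "W_B1 pts *\<^sub>v c = 0\<^sub>v 8"
  shows "c = 0\<^sub>v 8"
proof -
  have "\<forall>(x,y) \<in> variety \<beta>. peval (ext10 c) x y = 0"
  proof (intro ballI, clarify)
    fix x y assume "(x,y) \<in> variety \<beta>"
    then obtain j where j: "j < 8" "pts!j = (x,y)" using V L by (metis in_set_conv_nth)
    have "peval (ext10 c) x y = (W_B1 pts *\<^sub>v c) $ j"
      using j by (simp add: peval_ext10 WB1_mult[OF c(1)])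
    then show "peval (ext10 c) x y = 0" using c(2) j by simp
  qed
  moreover have W: "\<forall>a\<in>carrier_vec 10. (\<forall>(x,y)\<in>variety \<beta>. peval a x y = 0) \<longrightarrow> M3 \<beta> *\<^sub>v a = 0\<^sub>v 10"
    using wc by (simp only: weakly_consistent_def)
  ultimately have "M3 \<beta> *\<^sub>v ext10 c = 0\<^sub>v 10" using ext10_carrier by simp
  then have "ext10 c = 0\<^sub>v 10" by (intro indep8[OF LI D ext10_carrier]) (auto simp: ext10_def)
  then have "ext10 c $ k = 0" if "k < 8" for k using that by simp
  then show ?thesis using c(1) by (intro eq_vecI) (auto simp: ext10_def)
qed

lemma WB1_inv:
  assumes inj: "\<And>c. c \<in> carrier_vec 8 \<Longrightarrow> W_B1 pts *\<^sub>v c = 0\<^sub>v 8 \<Longrightarrow> c = 0\<^sub>v 8"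
  shows "\<exists>B. mat_inverse (W_B1 pts) = Some B \<and> W_B1 pts * B = 1\<^sub>m 8 \<and> B * W_B1 pts = 1\<^sub>m 8 \<and> B \<in> carrier_mat 8 8"
proof -
  have "det (W_B1 pts) \<noteq> 0"
  proof
    assume "det (W_B1 pts) = 0"
    then obtain v where v: "v \<in> carrier_vec 8" "v \<noteq> 0\<^sub>v 8" "W_B1 pts *\<^sub>v v = 0\<^sub>v 8"
      using det_0_iff_vec_prod_zero[OF WB1_carrier[of pts]] by blast
    from inj[OF v(1) v(3)] v(2) show False by simp
  qed
  then have U: "W_B1 pts \<in> Units (ring_mat TYPE(real) 8 undefined)"
    by (rule det_non_zero_imp_unit[OF WB1_carrier])
  show ?thesis
  proof (cases "mat_inverse (W_B1 pts)")
    case None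
    have "W_B1 pts \<notin> Units (ring_mat TYPE(real) 8 undefined)" by (rule mat_inverse(1)[OF WB1_carrier None])
    then show ?thesis using U by contradiction
  next
    case (Some B)
    have "W_B1 pts * B = 1\<^sub>m 8 \<and> B * W_B1 pts = 1\<^sub>m 8 \<and> B \<in> carrier_mat 8 8" by (rule mat_inverse(2)[OF WB1_carrier Some])
    then show ?thesis using Some by blast
  qed
qed

lemma variety_mem:
  assumes LI: "module.lin_indpt class_ring (module_vec TYPE(real) 10) (set (ws8 \<beta>))"
    and D: "distinct (ws8 \<beta>)"
    and k1: "k1 \<in> carrier_vec 10" "M3 \<beta> *\<^sub>v k1 = 0\<^sub>v 10" "k1 $ 8 = 1" "k1 $ 9 = 0"
    and k2: "k2 \<in> carrier_vec 10" "M3 \<beta> *\<^sub>v k2 = 0\<^sub>v 10" "k2 $ 8 = 0" "k2 $ 9 = 1"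
    and z: "peval k1 x y = 0" "peval k2 x y = 0"
  shows "(x,y) \<in> variety \<beta>"
  unfolding variety_def
proof (clarify)
  fix a :: "real vec" assume a: "a \<in> carrier_vec 10" "M3 \<beta> *\<^sub>v a = 0\<^sub>v 10"
  define d where "d = Matrix.vec 10 (\<lambda>r. a $ r - a $ 8 * k1 $ r - a $ 9 * k2 $ r)"
  have dc: "d \<in> carrier_vec 10" by (simp add: d_def)
  have "M3 \<beta> *\<^sub>v d = 0\<^sub>v 10"
  proof (rule eq_vecI)
    fix s assume "s < dim_vec (0\<^sub>v 10 :: real vec)"
    then have s: "s < 10" by simp
    have "(M3 \<beta> *\<^sub>v d) $ s = (\<Sum>i<10. M3 \<beta> $$ (s,i) * a $ i) - a $ 8 * (\<Sum>i<10. M3 \<beta> $$ (s,i) * k1 $ i)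
        - a $ 9 * (\<Sum>i<10. M3 \<beta> $$ (s,i) * k2 $ i)"
      unfolding mat_mult10[OF M3_carrier dc s] sum_distrib_left sum_subtractf[symmetric]
      by (intro sum.cong) (auto simp: d_def algebra_simps)
    also have "\<dots> = 0"
    proof -
      have za: "(\<Sum>i<10. M3 \<beta> $$ (s,i) * a $ i) = 0"
      proof -
        have "(\<Sum>i<10. M3 \<beta> $$ (s,i) * a $ i) = (M3 \<beta> *\<^sub>v a) $ s" by (rule mat_mult10[OF M3_carrier a(1) s, symmetric])
        then show ?thesis using a(2) s by simp
      qed
      have zk1: "(\<Sum>i<10. M3 \<beta> $$ (s,i) * k1 $ i) = 0"
      proof -
        have "(\<Sum>i<10. M3 \<beta> $$ (s,i) * k1 $ i) = (M3 \<beta> *\<^sub>v k1) $ s" by (rule mat_mult10[OF M3_carrier k1(1) s, symmetric])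
        then show ?thesis using k1(2) s by simp
      qed
      have zk2: "(\<Sum>i<10. M3 \<beta> $$ (s,i) * k2 $ i) = 0"
      proof -
        have "(\<Sum>i<10. M3 \<beta> $$ (s,i) * k2 $ i) = (M3 \<beta> *\<^sub>v k2) $ s" by (rule mat_mult10[OF M3_carrier k2(1) s, symmetric])
        then show ?thesis using k2(2) s by simp
      qed
      show ?thesis using za zk1 zk2 by simp
    qed
    finally show "(M3 \<beta> *\<^sub>v d) $ s = 0\<^sub>v 10 $ s" using s by simp
  qed (simp)
  then have "d = 0\<^sub>v 10" by (intro indep8[OF LI D dc]) (auto simp: d_def k1 k2)
  have ar: "a $ r = a $ 8 * k1 $ r + a $ 9 * k2 $ r" if "r < 10" for r
  proof -
    have "d $ r = 0" using \<open>d = 0\<^sub>v 10\<close> that by simp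
    then show ?thesis using that unfolding d_def by simp
  qed
  have "peval a x y = (\<Sum>r<10. (a $ 8 * k1 $ r + a $ 9 * k2 $ r) * mon r x y)"
    unfolding peval_mon
  proof (rule sum.cong[OF refl])
    fix r assume "r \<in> {..<10::nat}"
    then have "a $ r = a $ 8 * k1 $ r + a $ 9 * k2 $ r" by (intro ar) simp
    then show "a $ r * mon r x y = (a $ 8 * k1 $ r + a $ 9 * k2 $ r) * mon r x y" by (rule arg_cong)
  qed
  also have "\<dots> = a $ 8 * peval k1 x y + a $ 9 * peval k2 x y"
    unfolding peval_mon by (simp add: distrib_right sum.distrib sum_distrib_left mult.assoc)
  finally have "peval a x y = a $ 8 * peval k1 x y + a $ 9 * peval k2 x y" .
  then show "peval a x y = 0" using z by simp
qed

lemma atomic_wc: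
  assumes at: "atomic \<beta> pts \<rho>" and V: "set pts = variety \<beta>" and L: "length pts = 8"
  shows "weakly_consistent \<beta>"
  unfolding weakly_consistent_def
proof (intro ballI impI)
  fix a :: "real vec" assume a: "a \<in> carrier_vec 10" and z: "\<forall>(x,y) \<in> variety \<beta>. peval a x y = 0"
  have zl: "peval a (fst (pts!l)) (snd (pts!l)) = 0" if "l < 8" for l
  proof -
    have "pts!l \<in> set pts" using L that by simp
    then have pv: "pts!l \<in> variety \<beta>" using V by simp
    have zz: "\<forall>p \<in> variety \<beta>. peval a (fst p) (snd p) = 0" using z by (simp add: case_prod_beta)
    show ?thesis using zz pv by blast
  qed
  show "M3 \<beta> *\<^sub>v a = 0\<^sub>v 10"
  proof (rule eq_vecI)
    fix s assume "s < dim_vec (0\<^sub>v 10 :: real vec)"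
    then have s: "s < 10" by simp
    have "(M3 \<beta> *\<^sub>v a) $ s = (\<Sum>l<8. \<rho> l * mon s (fst (pts!l)) (snd (pts!l)) * peval a (fst (pts!l)) (snd (pts!l)))"
      by (rule atomic_M3[OF at a s])
    also have "\<dots> = 0" by (intro sum.neutral ballI) (simp add: zl)
    finally show "(M3 \<beta> *\<^sub>v a) $ s = 0\<^sub>v 10 $ s" using s by simp
  qed simp
qed

lemma sum_pts: assumes "distinct pts" "length pts = 8"
  shows "(\<Sum>x\<in>set pts. f x) = (\<Sum>l<8. f (pts ! l))"
  using sum.reindex_bij_betw[OF bij_betw_nth[OF assms(1) refl refl], of f] assms(2) by simp

lemma mono_meas[measurable]: "(\<lambda>p::real\<times>real. fst p ^ i * snd p ^ j) \<in> borel_measurable borel"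
  by (rule borel_measurable_continuous_onI) (intro continuous_intros)

lemma atomic_measure:
  fixes pts :: "(real \<times> real) list" and \<rho> :: "nat \<Rightarrow> real"
  assumes D: "distinct pts" and L: "length pts = 8" and P: "\<forall>l<8. \<rho> l \<ge> 0"
  shows "\<exists>\<mu>::(real\<times>real) measure. sets \<mu> = sets borel \<and> (\<forall>i j. integrable \<mu> (\<lambda>p. fst p^i * snd p^j) \<and>
     (\<integral>p. fst p^i * snd p^j \<partial>\<mu>) = (\<Sum>l<8. \<rho> l * fst (pts!l)^i * snd (pts!l)^j))"
proof -
  define S where "S = set pts"
  define g where "g p = (\<Sum>l<8. \<rho> l * indicator {pts!l} p)" for p :: "real \<times> real"
  have gpt: "g (pts!l) = \<rho> l" if "l < 8" for l
  proof -
    have "g (pts!l) = (\<Sum>m<8. if m = l then \<rho> m else 0)"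
      unfolding g_def using D L that by (intro sum.cong) (auto simp: nth_eq_iff_index_eq)
    then show ?thesis using that by simp
  qed
  have gnn: "g p \<ge> 0" for p unfolding g_def using P by (intro sum_nonneg) auto
  define \<mu> where "\<mu> = distr (density (count_space S) (\<lambda>p. ennreal (g p))) borel (\<lambda>p. p)"
  have meas: "(\<lambda>p. p) \<in> measurable (density (count_space S) (\<lambda>p. ennreal (g p))) borel" by simp
  have fin: "finite S" by (simp add: S_def)
  have "sets \<mu> = sets borel" by (simp add: \<mu>_def)
  moreover have "integrable \<mu> (\<lambda>p. fst p^i * snd p^j) \<and>
     (\<integral>p. fst p^i * snd p^j \<partial>\<mu>) = (\<Sum>l<8. \<rho> l * fst (pts!l)^i * snd (pts!l)^j)" for i j
  proof
    show "integrable \<mu> (\<lambda>p. fst p^i * snd p^j)"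
      unfolding \<mu>_def
      by (subst integrable_distr_eq[OF meas mono_meas], subst integrable_density)
         (auto simp: gnn integrable_count_space[OF fin])
    have "(\<integral>p. fst p^i * snd p^j \<partial>\<mu>) = (\<integral>p. g p * (fst p^i * snd p^j) \<partial>count_space S)"
      unfolding \<mu>_def
      by (subst integral_distr[OF meas mono_meas], subst integral_density) (auto simp: gnn)
    also have "\<dots> = (\<Sum>p\<in>S. g p * (fst p^i * snd p^j))"
      by (rule lebesgue_integral_count_space_finite[OF fin])
    also have "\<dots> = (\<Sum>l<8. g (pts!l) * (fst (pts!l)^i * snd (pts!l)^j))"
      unfolding S_def by (rule sum_pts[OF D L])
    also have "\<dots> = (\<Sum>l<8. \<rho> l * fst (pts!l)^i * snd (pts!l)^j)"
      by (intro sum.cong) (auto simp: gpt)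
    finally show "(\<integral>p. fst p^i * snd p^j \<partial>\<mu>) = (\<Sum>l<8. \<rho> l * fst (pts!l)^i * snd (pts!l)^j)" .
  qed
  ultimately show ?thesis by blast
qed

lemma measure_atomic:
  fixes \<mu> :: "(real\<times>real) measure"
  assumes S: "sets \<mu> = sets borel"
    and I: "\<forall>i j. i + j \<le> 6 \<longrightarrow> integrable \<mu> (\<lambda>p. fst p ^ i * snd p ^ j) \<and>
        (\<integral>p. fst p ^ i * snd p ^ j \<partial>\<mu>) = \<beta> i j"
    and AE: "AE p in \<mu>. p \<in> set pts" and D: "distinct pts" and L: "length pts = 8"
  shows "\<forall>u v. u + v \<le> 6 \<longrightarrow> \<beta> u v = (\<Sum>l<8. measure \<mu> {pts!l} * fst (pts!l)^u * snd (pts!l)^v)"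
proof (intro allI impI)
  fix u v :: nat assume uv: "u + v \<le> 6"
  have "integrable \<mu> (\<lambda>p. 1::real)" using I[rule_format, of 0 0] by simp
  then have "(\<integral>\<^sup>+ x. ennreal (norm (1::real)) \<partial>\<mu>) < \<infinity>" by (simp add: integrable_iff_bounded)
  then have "emeasure \<mu> (space \<mu>) < \<infinity>" by simp
  then interpret finite_measure \<mu> by (rule finite_measureI[OF less_imp_neq])
  have sing: "{p} \<in> sets \<mu>" for p :: "real\<times>real" using S by simp
  let ?f = "\<lambda>p::real\<times>real. fst p ^ u * snd p ^ v"
  let ?g = "\<lambda>p. \<Sum>l<8. ?f (pts!l) * indicator {pts!l} p"
  have fm: "?f \<in> borel_measurable \<mu>" by (subst measurable_cong_sets[OF S refl]) (rule mono_meas)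
  have gm: "?g \<in> borel_measurable \<mu>"
    apply (rule borel_measurable_sum)
    apply (rule borel_measurable_times[OF borel_measurable_const borel_measurable_indicator])
    by (rule sing)
  have eq: "?f p = ?g p" if pin: "p \<in> set pts" for p
  proof -
    obtain l where l: "l < 8" "p = pts!l" using pin L by (auto simp: in_set_conv_nth)
    have "?g p = (\<Sum>m<8. if m = l then ?f (pts!l) else 0)"
      using D L l by (intro sum.cong) (auto simp: nth_eq_iff_index_eq)
    then show ?thesis using l by simp
  qed
  have "\<beta> u v = integral\<^sup>L \<mu> ?f" using I uv by simp
  also have "\<dots> = integral\<^sup>L \<mu> ?g"
    by (rule integral_cong_AE[OF fm gm]) (use AE eq in \<open>elim AE_mp, intro AE_I2 impI\<close>, blast)
  also have "\<dots> = (\<Sum>l<8. ?f (pts!l) * measure \<mu> {pts!l})"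
  proof -
    have "integral\<^sup>L \<mu> ?g = (\<Sum>l<8. integral\<^sup>L \<mu> (\<lambda>p. ?f (pts!l) * indicator {pts!l} p))"
      by (rule Bochner_Integration.integral_sum, rule integrable_mult_right, rule integrable_real_indicator[OF sing]) (simp add: emeasure_eq_measure)
    also have "\<dots> = (\<Sum>l<8. ?f (pts!l) * measure \<mu> {pts!l})"
      using sing by (intro sum.cong refl) (simp add: sets.Int_space_eq2)
    finally show ?thesis .
  qed
  finally show "\<beta> u v = (\<Sum>l<8. measure \<mu> {pts!l} * fst (pts!l)^u * snd (pts!l)^v)"
    by (simp add: ac_simps)
qed

lemma atomic_riesz:
  assumes at: "atomic \<beta> pts \<rho>" and st: "fst st + snd st = 4" and ij: "i + j \<le> 2"
    and a: "a \<in> carrier_vec 8"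
    and Wa: "\<And>l. l < 8 \<Longrightarrow> (W_B1 pts *\<^sub>v a) $ l = fst (pts!l) ^ fst st * snd (pts!l) ^ snd st"
  shows "riesz \<beta> (mono_times i j (resid_poly st a)) = 0"
proof -
  let ?X = "\<lambda>l. fst (pts!l)" and ?Y = "\<lambda>l. snd (pts!l)"
  have "riesz \<beta> (mono_times i j (resid_poly st a)) =
    \<beta> (fst st + i) (snd st + j) - (\<Sum>k<8. a $ k * \<beta> (fst (mons!k) + i) (snd (mons!k) + j))"
    using st ij by (intro riesz_resid) auto
  also have "\<dots> = (\<Sum>l<8. \<rho> l * ?X l ^ (fst st + i) * ?Y l ^ (snd st + j)) -
      (\<Sum>k<8. a $ k * (\<Sum>l<8. \<rho> l * ?X l ^ (fst (mons!k) + i) * ?Y l ^ (snd (mons!k) + j)))"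
  proof -
    have "\<beta> (fst (mons!k) + i) (snd (mons!k) + j) = (\<Sum>l<8. \<rho> l * ?X l ^ (fst (mons!k) + i) * ?Y l ^ (snd (mons!k) + j))"
      if "k < 8" for k using at mons_deg8[OF that] ij unfolding atomic_def by simp
    moreover have "\<beta> (fst st + i) (snd st + j) = (\<Sum>l<8. \<rho> l * ?X l ^ (fst st + i) * ?Y l ^ (snd st + j))"
      using at st ij unfolding atomic_def by simp
    ultimately show ?thesis by simp
  qed
  also have "\<dots> = (\<Sum>l<8. \<rho> l * ?X l ^ i * ?Y l ^ j * (?X l ^ fst st * ?Y l ^ snd st - (\<Sum>k<8. a $ k * mon k (?X l) (?Y l))))"
  proof -
    have e: "\<rho> l * ?X l ^ i * ?Y l ^ j * (?X l ^ fst st * ?Y l ^ snd st - (\<Sum>k<8. a $ k * mon k (?X l) (?Y l)))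
      = \<rho> l * ?X l ^ (fst st + i) * ?Y l ^ (snd st + j) -
        (\<Sum>k<8. a $ k * (\<rho> l * ?X l ^ (fst (mons!k) + i) * ?Y l ^ (snd (mons!k) + j)))" for l
      unfolding right_diff_distrib sum_distrib_left
      by (intro arg_cong2[where f="(-)"] sum.cong refl) (simp_all add: mon_def power_add algebra_simps)
    show ?thesis unfolding e sum_subtractf sum_distrib_left
      by (subst (2) sum.swap) (rule refl)
  qed
  also have "\<dots> = 0"
  proof -
    have "(\<Sum>k<8. a $ k * mon k (?X l) (?Y l)) = ?X l ^ fst st * ?Y l ^ snd st" if "l < 8" for l
      by (metis WB1_mult[OF a that] Wa[OF that])
    then show ?thesis by simp
  qed
  finally show ?thesis .
qed


lemma ae_kernel:
  fixes \<mu> :: "(real \<times> real) measure"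
  assumes I: "\<forall>i j. i + j \<le> 6 \<longrightarrow> integrable \<mu> (\<lambda>p. fst p ^ i * snd p ^ j) \<and>
        (\<integral>p. fst p ^ i * snd p ^ j \<partial>\<mu>) = \<beta> i j"
    and k: "k \<in> carrier_vec 10" "M3 \<beta> *\<^sub>v k = 0\<^sub>v 10"
  shows "AE p in \<mu>. peval k (fst p) (snd p) = 0"
proof -
  let ?e1 = "\<lambda>r c. fst (mons!r) + fst (mons!c)" and ?e2 = "\<lambda>r c. snd (mons!r) + snd (mons!c)"
  let ?t = "\<lambda>r c (p::real\<times>real). k $ r * k $ c * (fst p ^ ?e1 r c * snd p ^ ?e2 r c)"
  have deg: "?e1 r c + ?e2 r c \<le> 6" if "r < 10" "c < 10" for r c
    using mons_deg[OF that(1)] mons_deg[OF that(2)] by linarith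
  have sq: "(peval k (fst p) (snd p))^2 = (\<Sum>r<10. \<Sum>c<10. ?t r c p)" for p
    unfolding peval_mon power2_eq_square sum_product
    by (intro sum.cong refl) (simp add: mon_def power_add mult_ac)
  have int_t: "integrable \<mu> (?t r c)" if "r < 10" "c < 10" for r c
    by (rule integrable_mult_right) (use I deg[OF that] in blast)
  have int_r: "integrable \<mu> (\<lambda>p. \<Sum>c<10. ?t r c p)" if "r < 10" for r
    by (rule Bochner_Integration.integrable_sum) (use int_t that in auto)
  have int: "integrable \<mu> (\<lambda>p. \<Sum>r<10. \<Sum>c<10. ?t r c p)"
    by (rule Bochner_Integration.integrable_sum) (use int_r in auto)
  have "(\<integral>p. (\<Sum>r<10. \<Sum>c<10. ?t r c p) \<partial>\<mu>) = (\<Sum>r<10. \<integral>p. (\<Sum>c<10. ?t r c p) \<partial>\<mu>)"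
    by (rule Bochner_Integration.integral_sum) (use int_r in auto)
  also have "\<dots> = (\<Sum>r<10. \<Sum>c<10. \<integral>p. ?t r c p \<partial>\<mu>)"
    by (intro sum.cong refl Bochner_Integration.integral_sum) (use int_t in auto)
  also have "\<dots> = (\<Sum>r<10. \<Sum>c<10. k $ r * k $ c * \<beta> (?e1 r c) (?e2 r c))"
    by (intro sum.cong refl) (use I deg in auto)
  also have "\<dots> = (\<Sum>r<10. k $ r * (M3 \<beta> *\<^sub>v k) $ r)"
  proof (intro sum.cong refl)
    fix r assume "r \<in> {..<10::nat}"
    then have r: "r < 10" by simp
    show "(\<Sum>c<10. k $ r * k $ c * \<beta> (?e1 r c) (?e2 r c)) = k $ r * (M3 \<beta> *\<^sub>v k) $ r"
      unfolding M3_mult[OF r k(1)] sum_distrib_left by (simp add: mult_ac)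
  qed
  also have "\<dots> = 0" using k(2) by simp
  finally have "(\<integral>p. (peval k (fst p) (snd p))^2 \<partial>\<mu>) = 0" unfolding sq .
  moreover have int2: "integrable \<mu> (\<lambda>p. (peval k (fst p) (snd p))^2)" unfolding sq by (rule int)
  have "((\<integral>p. (peval k (fst p) (snd p))^2 \<partial>\<mu>) = 0) = (AE p in \<mu>. (peval k (fst p) (snd p))^2 = 0)"
    by (rule integral_nonneg_eq_0_iff_AE[OF int2]) simp
  ultimately have "AE p in \<mu>. (peval k (fst p) (snd p))^2 = 0" by simp
  then show ?thesis by simp
qed

lemma lc1: "(\<Sum>r\<in>R. k r * (f r - (\<Sum>l\<in>L. \<rho> l * g l r))) = (

   (\<Sum>r\<in>R. k r * f r) - (\<Sum>l\<in>L. \<rho> l * (\<Sum>r\<in>R. k r * g l r)) :: real)"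
proof -
  have "(\<Sum>r\<in>R. \<Sum>l\<in>L. k r * (\<rho> l * g l r)) = (\<Sum>l\<in>L. \<Sum>r\<in>R. \<rho> l * (k r * g l r))"
    by (subst sum.swap) (intro sum.cong refl; rule mult.left_commute)
  then show ?thesis unfolding right_diff_distrib sum_subtractf sum_distrib_left by simp
qed

lemma lc2: "((F::real) - (\<Sum>l\<in>L. \<rho> l * G l)) - (\<Sum>k\<in>K. a k * (f k - (\<Sum>l\<in>L. \<rho> l * g l k))) =
   (F - (\<Sum>k\<in>K. a k * f k)) - (\<Sum>l\<in>L. \<rho> l * (G l - (\<Sum>k\<in>K. a k * g l k)))"
proof -
  have sw: "(\<Sum>k\<in>K. a k * (\<Sum>l\<in>L. \<rho> l * g l k)) = (\<Sum>l\<in>L. \<rho> l * (\<Sum>k\<in>K. a k * g l k))"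
  proof -
    have "(\<Sum>k\<in>K. a k * (\<Sum>l\<in>L. \<rho> l * g l k)) = (\<Sum>k\<in>K. \<Sum>l\<in>L. \<rho> l * (a k * g l k))"
      unfolding sum_distrib_left by (intro sum.cong refl; rule mult.left_commute)
    also have "\<dots> = (\<Sum>l\<in>L. \<Sum>k\<in>K. \<rho> l * (a k * g l k))" by (rule sum.swap)
    also have "\<dots> = (\<Sum>l\<in>L. \<rho> l * (\<Sum>k\<in>K. a k * g l k))" by (simp add: sum_distrib_left)
    finally show ?thesis .
  qed
  show ?thesis unfolding lc1 using sw by (simp add: right_diff_distrib sum_subtractf)
qed

lemma forward:
  assumes V: "set pts = variety \<beta>" and D: "distinct pts" and L: "length pts = 8"
    and LI: "module.lin_indpt class_ring (module_vec TYPE(real) 10) (set (ws8 \<beta>))"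
    and Dw: "distinct (ws8 \<beta>)"
    and SP: "module.span class_ring (module_vec TYPE(real) 10) (set (ws8 \<beta>)) = vec_space.col_space 10 (M3 \<beta>)"
    and hm: "has_rep_measure \<beta>"
  shows "\<exists>\<rho>. atomic \<beta> pts \<rho>"
proof -
  obtain \<mu> :: "(real\<times>real) measure" where S: "sets \<mu> = sets borel" and
    I: "\<forall>i j. i + j \<le> 6 \<longrightarrow> integrable \<mu> (\<lambda>p. fst p ^ i * snd p ^ j) \<and>
        (\<integral>p. fst p ^ i * snd p ^ j \<partial>\<mu>) = \<beta> i j"
    using hm unfolding has_rep_measure_def by blast
  obtain k1 where k1: "k1 \<in> carrier_vec 10" "M3 \<beta> *\<^sub>v k1 = 0\<^sub>v 10" "k1 $ 8 = 1"
      "\<forall>s. 8 \<le> s \<and> s < 10 \<and> s \<noteq> 8 \<longrightarrow> k1 $ s = 0"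
    using kernel_vec[OF SP Dw, of 8] by auto
  obtain k2 where k2: "k2 \<in> carrier_vec 10" "M3 \<beta> *\<^sub>v k2 = 0\<^sub>v 10" "k2 $ 9 = 1"
      "\<forall>s. 8 \<le> s \<and> s < 10 \<and> s \<noteq> 9 \<longrightarrow> k2 $ s = 0"
    using kernel_vec[OF SP Dw, of 9] by auto
  have k19: "k1 $ 9 = 0" using k1(4) by auto
  have k28: "k2 $ 8 = 0" using k2(4) by auto
  have "AE p in \<mu>. peval k1 (fst p) (snd p) = 0" by (rule ae_kernel[OF I k1(1,2)])
  moreover have "AE p in \<mu>. peval k2 (fst p) (snd p) = 0" by (rule ae_kernel[OF I k2(1,2)])
  ultimately have AEp: "AE p in \<mu>. p \<in> set pts"
  proof eventually_elim
    case (elim p)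
    have "(fst p, snd p) \<in> variety \<beta>"
      by (rule variety_mem[OF LI Dw k1(1,2,3) k19 k2(1,2) k28 k2(3) elim])
    then show ?case using V by simp
  qed
  have "atomic \<beta> pts (\<lambda>l. measure \<mu> {pts!l})" unfolding atomic_def using measure_atomic[OF S I AEp D L] by simp
  then show ?thesis by blast
qed

lemma inv_app: assumes "W_B1 pts * B = 1\<^sub>m 8" "B \<in> carrier_mat 8 8" "v \<in> carrier_vec 8"
  shows "W_B1 pts *\<^sub>v (B *\<^sub>v v) = v"
proof -
  have "(W_B1 pts * B) *\<^sub>v v = W_B1 pts *\<^sub>v (B *\<^sub>v v)" by (rule assoc_mult_mat_vec[OF WB1_carrier assms(2,3)])
  then show ?thesis using assms by simp
qed

lemma converse:
  assumes psd: "psd_mat 10 (M3 \<beta>)" and V: "set pts = variety \<beta>" and D: "distinct pts" and L: "length pts = 8"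
    and LI: "module.lin_indpt class_ring (module_vec TYPE(real) 10) (set (ws8 \<beta>))"
    and Dw: "distinct (ws8 \<beta>)"
    and SP: "module.span class_ring (module_vec TYPE(real) 10) (set (ws8 \<beta>)) = vec_space.col_space 10 (M3 \<beta>)"
    and B: "W_B1 pts * B = 1\<^sub>m 8" "B * W_B1 pts = 1\<^sub>m 8" "B \<in> carrier_mat 8 8"
    and RA: "\<forall>i j. i + j \<le> 2 \<longrightarrow> riesz \<beta> (mono_times i j (resid_poly (4,0) (B *\<^sub>v Matrix.vec 8 (\<lambda>k. fst (pts!k) ^ 4)))) = 0"
    and RB: "\<forall>i j. i + j \<le> 2 \<longrightarrow> riesz \<beta> (mono_times i j (resid_poly (3,1) (B *\<^sub>v Matrix.vec 8 (\<lambda>k. fst (pts!k) ^ 3 * snd (pts!k))))) = 0"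
  shows "has_rep_measure \<beta>"
proof -
  define a where "a = B *\<^sub>v Matrix.vec 8 (\<lambda>k. fst (pts!k) ^ 4)"
  define b where "b = B *\<^sub>v Matrix.vec 8 (\<lambda>k. fst (pts!k) ^ 3 * snd (pts!k))"
  let ?X = "\<lambda>l. fst (pts!l)" and ?Y = "\<lambda>l. snd (pts!l)"
  have ac: "a \<in> carrier_vec 8" "b \<in> carrier_vec 8" using B(3) by (simp_all add: a_def b_def)
  have Wa: "(\<Sum>k<8. a $ k * mon k (?X l) (?Y l)) = ?X l ^ 4" if "l < 8" for l
  proof -
    have "W_B1 pts *\<^sub>v a = Matrix.vec 8 (\<lambda>k. fst (pts!k) ^ 4)" unfolding a_def by (rule inv_app[OF B(1,3)]) simp
    then have "(W_B1 pts *\<^sub>v a) $ l = ?X l ^ 4" using that by simp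
    then show ?thesis using WB1_mult[OF ac(1) that] by simp
  qed
  have Wb: "(\<Sum>k<8. b $ k * mon k (?X l) (?Y l)) = ?X l ^ 3 * ?Y l" if "l < 8" for l
  proof -
    have "W_B1 pts *\<^sub>v b = Matrix.vec 8 (\<lambda>k. fst (pts!k) ^ 3 * snd (pts!k))" unfolding b_def by (rule inv_app[OF B(1,3)]) simp
    then have "(W_B1 pts *\<^sub>v b) $ l = ?X l ^ 3 * ?Y l" using that by simp
    then show ?thesis using WB1_mult[OF ac(2) that] by simp
  qed
  obtain k1 where k1: "k1 \<in> carrier_vec 10" "M3 \<beta> *\<^sub>v k1 = 0\<^sub>v 10" "k1 $ 8 = 1"
      "\<forall>s. 8 \<le> s \<and> s < 10 \<and> s \<noteq> 8 \<longrightarrow> k1 $ s = 0"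
    using kernel_vec[OF SP Dw, of 8] by auto
  obtain k2 where k2: "k2 \<in> carrier_vec 10" "M3 \<beta> *\<^sub>v k2 = 0\<^sub>v 10" "k2 $ 9 = 1"
      "\<forall>s. 8 \<le> s \<and> s < 10 \<and> s \<noteq> 9 \<longrightarrow> k2 $ s = 0"
    using kernel_vec[OF SP Dw, of 9] by auto
  have k19: "k1 $ 9 = 0" using k1(4) by auto
  have k28: "k2 $ 8 = 0" using k2(4) by auto
  have Kb: "(\<Sum>r<10. k $ r * \<beta> (fst (mons!r) + i) (snd (mons!r) + j)) = 0"
    if kk: "k \<in> carrier_vec 10" "M3 \<beta> *\<^sub>v k = 0\<^sub>v 10" and ij: "i + j \<le> 3" for k i j
  proof -
    obtain s where s: "s < 10" "mons!s = (i,j)" using mons_surj[OF ij] by auto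
    have "(M3 \<beta> *\<^sub>v k) $ s = (\<Sum>c<10. \<beta> (fst (mons!s) + fst (mons!c)) (snd (mons!s) + snd (mons!c)) * k $ c)"
      by (rule M3_mult[OF s(1) kk(1)])
    also have "\<dots> = (\<Sum>r<10. k $ r * \<beta> (fst (mons!r) + i) (snd (mons!r) + j))"
      by (intro sum.cong refl) (simp add: s(2) add.commute mult.commute)
    finally have eq: "(M3 \<beta> *\<^sub>v k) $ s = (\<Sum>r<10. k $ r * \<beta> (fst (mons!r) + i) (snd (mons!r) + j))" .
    show ?thesis using kk(2) s(1) eq by simp
  qed
  have Ab: "\<beta> (4 + i) j - (\<Sum>k<8. a $ k * \<beta> (fst (mons!k) + i) (snd (mons!k) + j)) = 0" if "i + j \<le> 2" for i j
  proof -
    have "riesz \<beta> (mono_times i j (resid_poly (4,0) a)) = 0" using RA that by (simp add: a_def)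
    moreover have "riesz \<beta> (mono_times i j (resid_poly (4,0) a)) =
      \<beta> (fst (4::nat,0::nat) + i) (snd (4::nat,0::nat) + j) - (\<Sum>k<8. a $ k * \<beta> (fst (mons!k) + i) (snd (mons!k) + j))"
      by (rule riesz_resid) (use that in auto)
    ultimately show ?thesis by simp
  qed
  have Bb: "\<beta> (3 + i) (1 + j) - (\<Sum>k<8. b $ k * \<beta> (fst (mons!k) + i) (snd (mons!k) + j)) = 0" if "i + j \<le> 2" for i j
  proof -
    have "riesz \<beta> (mono_times i j (resid_poly (3,1) b)) = 0" using RB that by (simp add: b_def)
    moreover have "riesz \<beta> (mono_times i j (resid_poly (3,1) b)) =
      \<beta> (fst (3::nat,1::nat) + i) (snd (3::nat,1::nat) + j) - (\<Sum>k<8. b $ k * \<beta> (fst (mons!k) + i) (snd (mons!k) + j))"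
      by (rule riesz_resid) (use that in auto)
    ultimately show ?thesis by (simp add: add.commute)
  qed
  define bv where "bv = Matrix.vec 8 (\<lambda>k. \<beta> (fst (mons!k)) (snd (mons!k)))"
  define \<rho>v where "\<rho>v = transpose_mat B *\<^sub>v bv"
  have rho_fit: "(\<Sum>l<8. \<rho>v $ l * mon k (?X l) (?Y l)) = \<beta> (fst (mons!k)) (snd (mons!k))" if k: "k < 8" for k
  proof -
    have tt: "transpose_mat (W_B1 pts) * transpose_mat B = 1\<^sub>m 8"
      using transpose_mult[OF B(3) WB1_carrier[of pts]] B(2) by simp
    have "transpose_mat (W_B1 pts) *\<^sub>v \<rho>v = (transpose_mat (W_B1 pts) * transpose_mat B) *\<^sub>v bv"
      unfolding \<rho>v_def by (rule assoc_mult_mat_vec[symmetric]) (use B(3) WB1_carrier in \<open>auto simp: bv_def\<close>)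
    also have "\<dots> = bv" unfolding tt by (simp add: bv_def)
    finally have "(transpose_mat (W_B1 pts) *\<^sub>v \<rho>v) $ k = bv $ k" by simp
    moreover have "(transpose_mat (W_B1 pts) *\<^sub>v \<rho>v) $ k = (\<Sum>l<8. transpose_mat (W_B1 pts) $$ (k,l) * \<rho>v $ l)"
      by (rule mat_mult8) (use k B(3) WB1_carrier in \<open>auto simp: \<rho>v_def bv_def\<close>)
    moreover have "(\<Sum>l<8. transpose_mat (W_B1 pts) $$ (k,l) * \<rho>v $ l) = (\<Sum>l<8. \<rho>v $ l * mon k (?X l) (?Y l))"
      by (intro sum.cong refl) (use k in \<open>simp add: WB1_entry WB1_carrier[THEN carrier_matD(1)] WB1_carrier[THEN carrier_matD(2)] mult.commute\<close>)
    ultimately show ?thesis using k by (simp add: bv_def)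
  qed
  have pv: "peval k (?X l) (?Y l) = 0" if "l < 8" "k \<in> carrier_vec 10" "M3 \<beta> *\<^sub>v k = 0\<^sub>v 10" for l k
  proof -
    have "pts!l \<in> set pts" using L that(1) by simp
    then have "pts!l \<in> variety \<beta>" using V by simp
    then have "(?X l, ?Y l) \<in> variety \<beta>" by simp
    then have "\<forall>a\<in>carrier_vec 10. M3 \<beta> *\<^sub>v a = 0\<^sub>v 10 \<longrightarrow> peval a (?X l) (?Y l) = 0"
      unfolding variety_def by (simp add: case_prod_beta)
    then show ?thesis using that(2,3) by blast
  qed
  have nuK: "(\<Sum>r<10. k $ r * (?X l ^ (fst (mons!r) + i) * ?Y l ^ (snd (mons!r) + j))) = 0"
    if "l < 8" "k \<in> carrier_vec 10" "M3 \<beta> *\<^sub>v k = 0\<^sub>v 10" for l k i j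
  proof -
    have "(\<Sum>r<10. k $ r * (?X l ^ (fst (mons!r) + i) * ?Y l ^ (snd (mons!r) + j))) =
      ?X l ^ i * ?Y l ^ j * peval k (?X l) (?Y l)"
      unfolding peval_mon sum_distrib_left by (intro sum.cong refl) (simp add: mon_def power_add mult_ac)
    then show ?thesis using pv[OF that] by simp
  qed
  have nuA: "?X l ^ (4 + i) * ?Y l ^ j - (\<Sum>k<8. a $ k * (?X l ^ (fst (mons!k) + i) * ?Y l ^ (snd (mons!k) + j))) = 0"
    if "l < 8" for l i j
  proof -
    have "(\<Sum>k<8. a $ k * (?X l ^ (fst (mons!k) + i) * ?Y l ^ (snd (mons!k) + j))) =
      ?X l ^ i * ?Y l ^ j * (\<Sum>k<8. a $ k * mon k (?X l) (?Y l))"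
      unfolding sum_distrib_left by (intro sum.cong refl) (simp add: mon_def power_add mult_ac)
    then show ?thesis using Wa[OF that] by (simp add: power_add mult_ac)
  qed
  have nuB: "?X l ^ (3 + i) * ?Y l ^ (1 + j) - (\<Sum>k<8. b $ k * (?X l ^ (fst (mons!k) + i) * ?Y l ^ (snd (mons!k) + j))) = 0"
    if "l < 8" for l i j
  proof -
    have "(\<Sum>k<8. b $ k * (?X l ^ (fst (mons!k) + i) * ?Y l ^ (snd (mons!k) + j))) =
      ?X l ^ i * ?Y l ^ j * (\<Sum>k<8. b $ k * mon k (?X l) (?Y l))"
      unfolding sum_distrib_left by (intro sum.cong refl) (simp add: mon_def power_add mult_ac)
    then show ?thesis using Wb[OF that] by (simp add: power_add mult_ac)
  qed
  define w where "w u v = \<beta> u v - (\<Sum>l<8. \<rho>v $ l * (?X l ^ u * ?Y l ^ v))" for u v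
  have wK: "(\<Sum>r<10. k $ r * w (fst (mons!r) + i) (snd (mons!r) + j)) = 0"
    if "k \<in> carrier_vec 10" "M3 \<beta> *\<^sub>v k = 0\<^sub>v 10" "i + j \<le> 3" for k i j
  proof -
    have "(\<Sum>r<10. k $ r * w (fst (mons!r) + i) (snd (mons!r) + j)) =
      (\<Sum>r<10. k $ r * \<beta> (fst (mons!r) + i) (snd (mons!r) + j)) -
      (\<Sum>l<8. \<rho>v $ l * (\<Sum>r<10. k $ r * (?X l ^ (fst (mons!r) + i) * ?Y l ^ (snd (mons!r) + j))))"
      unfolding w_def by (rule lc1)
    moreover have "(\<Sum>l<8. \<rho>v $ l * (\<Sum>r<10. k $ r * (?X l ^ (fst (mons!r) + i) * ?Y l ^ (snd (mons!r) + j)))) = 0"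
    proof (intro sum.neutral ballI)
      fix l assume "l \<in> {..<8::nat}"
      then have "l < 8" by simp
      from nuK[OF this that(1,2)] show "\<rho>v $ l * (\<Sum>r<10. k $ r * (?X l ^ (fst (mons!r) + i) * ?Y l ^ (snd (mons!r) + j))) = 0"
        by simp
    qed
    ultimately show ?thesis using Kb[OF that] by simp
  qed
  have wA: "w (4 + i) j = (\<Sum>k<8. a $ k * w (fst (mons!k) + i) (snd (mons!k) + j))" if "i + j \<le> 2" for i j
  proof -
    have "w (4 + i) j - (\<Sum>k<8. a $ k * w (fst (mons!k) + i) (snd (mons!k) + j)) = 0"
    proof -
      have "w (4 + i) j - (\<Sum>k<8. a $ k * w (fst (mons!k) + i) (snd (mons!k) + j)) =
        (\<beta> (4 + i) j - (\<Sum>k<8. a $ k * \<beta> (fst (mons!k) + i) (snd (mons!k) + j))) -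
        (\<Sum>l<8. \<rho>v $ l * (?X l ^ (4 + i) * ?Y l ^ j - (\<Sum>k<8. a $ k * (?X l ^ (fst (mons!k) + i) * ?Y l ^ (snd (mons!k) + j)))))"
        unfolding w_def by (rule lc2)
      moreover have "(\<Sum>l<8. \<rho>v $ l * (?X l ^ (4 + i) * ?Y l ^ j - (\<Sum>k<8. a $ k * (?X l ^ (fst (mons!k) + i) * ?Y l ^ (snd (mons!k) + j))))) = 0" (is "(\<Sum>l<8. \<rho>v $ l * ?t l) = 0")
      proof (intro sum.neutral ballI)
        fix l assume "l \<in> {..<8::nat}"
        then have l8: "l < 8" by simp
        from nuA[OF l8, of i j] show "\<rho>v $ l * ?t l = 0" by simp
      qed
      ultimately show ?thesis using Ab[OF that] by simp
    qed
    then show ?thesis by simp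
  qed
  have wB: "w (3 + i) (1 + j) = (\<Sum>k<8. b $ k * w (fst (mons!k) + i) (snd (mons!k) + j))" if "i + j \<le> 2" for i j
  proof -
    have "w (3 + i) (1 + j) - (\<Sum>k<8. b $ k * w (fst (mons!k) + i) (snd (mons!k) + j)) = 0"
    proof -
      have "w (3 + i) (1 + j) - (\<Sum>k<8. b $ k * w (fst (mons!k) + i) (snd (mons!k) + j)) =
        (\<beta> (3 + i) (1 + j) - (\<Sum>k<8. b $ k * \<beta> (fst (mons!k) + i) (snd (mons!k) + j))) -
        (\<Sum>l<8. \<rho>v $ l * (?X l ^ (3 + i) * ?Y l ^ (1 + j) - (\<Sum>k<8. b $ k * (?X l ^ (fst (mons!k) + i) * ?Y l ^ (snd (mons!k) + j)))))"
        unfolding w_def by (rule lc2)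
      moreover have "(\<Sum>l<8. \<rho>v $ l * (?X l ^ (3 + i) * ?Y l ^ (1 + j) - (\<Sum>k<8. b $ k * (?X l ^ (fst (mons!k) + i) * ?Y l ^ (snd (mons!k) + j))))) = 0" (is "(\<Sum>l<8. \<rho>v $ l * ?t l) = 0")
      proof (intro sum.neutral ballI)
        fix l assume "l \<in> {..<8::nat}"
        then have l8: "l < 8" by simp
        from nuB[OF l8, of i j] show "\<rho>v $ l * ?t l = 0" by simp
      qed
      ultimately show ?thesis using Bb[OF that] by simp
    qed
    then show ?thesis by simp
  qed
  have wZ: "w (fst (mons!k)) (snd (mons!k)) = 0" if "k < 8" for k
  proof -
    have "(\<Sum>l<8. \<rho>v $ l * (?X l ^ fst (mons!k) * ?Y l ^ snd (mons!k))) = \<beta> (fst (mons!k)) (snd (mons!k))"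
      using rho_fit[OF that] by (simp add: mon_def)
    then show ?thesis unfolding w_def by simp
  qed
  have w0: "w u v = 0" if "u + v \<le> 6" for u v
    by (rule reduction[OF wK[OF k1(1,2)] wK[OF k2(1,2)] k1(3) k19 k28 k2(3) wA wB wZ that])
  have at: "atomic \<beta> pts (\<lambda>l. \<rho>v $ l)"
    unfolding atomic_def
  proof (intro allI impI)
    fix u v :: nat assume "u + v \<le> 6"
    from w0[OF this] show "\<beta> u v = (\<Sum>l<8. \<rho>v $ l * ?X l ^ u * ?Y l ^ v)" by (simp add: w_def mult.assoc)
  qed
  have pos: "\<rho>v $ l \<ge> 0" if l: "l < 8" for l
  proof -
    define e where "e = B *\<^sub>v unit_vec 8 l"
    have ec: "e \<in> carrier_vec 8" using B(3) by (simp add: e_def)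
    have We: "W_B1 pts *\<^sub>v e = unit_vec 8 l" unfolding e_def by (rule inv_app[OF B(1,3)]) simp
    have ev: "peval (ext10 e) (?X m) (?Y m) = (if m = l then 1 else 0)" if m: "m < 8" for m
    proof -
      have "peval (ext10 e) (?X m) (?Y m) = (W_B1 pts *\<^sub>v e) $ m"
        unfolding peval_ext10 WB1_mult[OF ec m] ..
      then show ?thesis using We m l by simp
    qed
    have "\<forall>v\<in>carrier_vec 10. 0 \<le> v \<bullet> (M3 \<beta> *\<^sub>v v)" using psd unfolding psd_mat_def by blast
    then have "0 \<le> ext10 e \<bullet> (M3 \<beta> *\<^sub>v ext10 e)" using ext10_carrier by blast
    also have "\<dots> = (\<Sum>m<8. \<rho>v $ m * (peval (ext10 e) (?X m) (?Y m))^2)"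
      by (rule atomic_quad[OF at ext10_carrier])
    also have "\<dots> = (\<Sum>m<8. if m = l then \<rho>v $ l else 0)"
      by (intro sum.cong refl) (simp add: ev)
    also have "\<dots> = \<rho>v $ l" using l by simp
    finally show ?thesis .
  qed
  obtain \<mu> :: "(real\<times>real) measure" where mu: "sets \<mu> = sets borel"
    "\<forall>i j. integrable \<mu> (\<lambda>p. fst p^i * snd p^j) \<and>
     (\<integral>p. fst p^i * snd p^j \<partial>\<mu>) = (\<Sum>l<8. \<rho>v $ l * fst (pts!l)^i * snd (pts!l)^j)"
  proof -
    have P: "\<forall>l<8. \<rho>v $ l \<ge> 0" using pos by blast
    show ?thesis using atomic_measure[OF D L P] that by blast
  qed
  have "\<forall>i j. i + j \<le> 6 \<longrightarrow> integrable \<mu> (\<lambda>p. fst p ^ i * snd p ^ j) \<and>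
        (\<integral>p. fst p ^ i * snd p ^ j \<partial>\<mu>) = \<beta> i j"
  proof (intro allI impI)
    fix i j :: nat assume ij: "i + j \<le> 6"
    have "\<beta> i j = (\<Sum>l<8. \<rho>v $ l * fst (pts!l)^i * snd (pts!l)^j)" using at ij unfolding atomic_def by blast
    then show "integrable \<mu> (\<lambda>p. fst p ^ i * snd p ^ j) \<and> (\<integral>p. fst p ^ i * snd p ^ j \<partial>\<mu>) = \<beta> i j"
      using mu(2) by simp
  qed
  then show ?thesis unfolding has_rep_measure_def using mu(1) by blast
qed

theorem theorem5p1:
  fixes \<beta> :: "nat \<Rightarrow> nat \<Rightarrow> real" and pts :: "(real \<times> real) list"
  assumes "psd_mat 10 (M3 \<beta>)"
    and "pd_mat 6 (M2 \<beta>)"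
    and "vec_space.rank 10 (M3 \<beta>) = 8"
    and "card (variety \<beta>) = 8"
    and "distinct pts" and "set pts = variety \<beta>"
    and "distinct (map (col (M3 \<beta>)) [0..<8])"
    and "module.lin_indpt class_ring (module_vec TYPE(real) 10) (set (map (col (M3 \<beta>)) [0..<8]))"
    and "module.span class_ring (module_vec TYPE(real) 10) (set (map (col (M3 \<beta>)) [0..<8]))
           = vec_space.col_space 10 (M3 \<beta>)"
  shows "has_rep_measure \<beta> \<longleftrightarrow>
    (weakly_consistent \<beta> \<and>
     (let a = the (mat_inverse (W_B1 pts)) *\<^sub>v Matrix.vec 8 (\<lambda>k. fst (pts!k) ^ 4);
          b = the (mat_inverse (W_B1 pts)) *\<^sub>v Matrix.vec 8 (\<lambda>k. fst (pts!k) ^ 3 * snd (pts!k))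
      in \<forall>i j. i + j \<le> 2 \<longrightarrow>
           riesz \<beta> (mono_times i j (resid_poly (4,0) a)) = 0 \<and>
           riesz \<beta> (mono_times i j (resid_poly (3,1) b)) = 0))"
proof -
  note psd = assms(1) and card = assms(4) and D = assms(5) and V = assms(6)
  have Dw: "distinct (ws8 \<beta>)" using assms(7) by (simp add: ws8_def)
  have LI: "module.lin_indpt class_ring (module_vec TYPE(real) 10) (set (ws8 \<beta>))" using assms(8) by (simp add: ws8_def)
  have SP: "module.span class_ring (module_vec TYPE(real) 10) (set (ws8 \<beta>)) = vec_space.col_space 10 (M3 \<beta>)"
    using assms(9) by (simp add: ws8_def)
  have L: "length pts = 8" using distinct_card[OF D] V card by simp
  have invB: "\<exists>B. mat_inverse (W_B1 pts) = Some B \<and> W_B1 pts * B = 1\<^sub>m 8 \<and> B * W_B1 pts = 1\<^sub>m 8 \<and> B \<in> carrier_mat 8 8"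
    if wc: "weakly_consistent \<beta>"
    by (rule WB1_inv, rule WB1_inj[OF wc V L LI Dw])
  show ?thesis
  proof
    assume hm: "has_rep_measure \<beta>"
    obtain \<rho> where at: "atomic \<beta> pts \<rho>" using forward[OF V D L LI Dw SP hm] by blast
    have wc: "weakly_consistent \<beta>" by (rule atomic_wc[OF at V L])
    obtain B where B: "mat_inverse (W_B1 pts) = Some B" "W_B1 pts * B = 1\<^sub>m 8" "B * W_B1 pts = 1\<^sub>m 8" "B \<in> carrier_mat 8 8"
      using invB[OF wc] by blast
    define a where "a = B *\<^sub>v Matrix.vec 8 (\<lambda>k. fst (pts!k) ^ 4)"
    define b where "b = B *\<^sub>v Matrix.vec 8 (\<lambda>k. fst (pts!k) ^ 3 * snd (pts!k))"
    have ac: "a \<in> carrier_vec 8" "b \<in> carrier_vec 8" using B(4) by (simp_all add: a_def b_def)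
    have Wa: "(W_B1 pts *\<^sub>v a) $ l = fst (pts!l) ^ fst (4::nat,0::nat) * snd (pts!l) ^ snd (4::nat,0::nat)" if "l < 8" for l
    proof -
      have "W_B1 pts *\<^sub>v a = Matrix.vec 8 (\<lambda>k. fst (pts!k) ^ 4)" unfolding a_def by (rule inv_app[OF B(2,4)]) simp
      then show ?thesis using that by simp
    qed
    have Wb: "(W_B1 pts *\<^sub>v b) $ l = fst (pts!l) ^ fst (3::nat,1::nat) * snd (pts!l) ^ snd (3::nat,1::nat)" if "l < 8" for l
    proof -
      have "W_B1 pts *\<^sub>v b = Matrix.vec 8 (\<lambda>k. fst (pts!k) ^ 3 * snd (pts!k))" unfolding b_def by (rule inv_app[OF B(2,4)]) simp
      then show ?thesis using that by simp
    qed
    have "\<forall>i j. i + j \<le> 2 \<longrightarrow>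
           riesz \<beta> (mono_times i j (resid_poly (4,0) a)) = 0 \<and>
           riesz \<beta> (mono_times i j (resid_poly (3,1) b)) = 0"
    proof (intro allI impI conjI)
      fix i j :: nat assume ij: "i + j \<le> 2"
      show "riesz \<beta> (mono_times i j (resid_poly (4,0) a)) = 0"
        by (rule atomic_riesz[OF at _ ij ac(1) Wa]) simp
      show "riesz \<beta> (mono_times i j (resid_poly (3,1) b)) = 0"
        by (rule atomic_riesz[OF at _ ij ac(2) Wb]) simp
    qed
    then show "weakly_consistent \<beta> \<and>
     (let a = the (mat_inverse (W_B1 pts)) *\<^sub>v Matrix.vec 8 (\<lambda>k. fst (pts!k) ^ 4);
          b = the (mat_inverse (W_B1 pts)) *\<^sub>v Matrix.vec 8 (\<lambda>k. fst (pts!k) ^ 3 * snd (pts!k))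
      in \<forall>i j. i + j \<le> 2 \<longrightarrow>
           riesz \<beta> (mono_times i j (resid_poly (4,0) a)) = 0 \<and>
           riesz \<beta> (mono_times i j (resid_poly (3,1) b)) = 0)"
      using wc B(1) by (simp add: Let_def a_def b_def)
  next
    assume rhs: "weakly_consistent \<beta> \<and>
     (let a = the (mat_inverse (W_B1 pts)) *\<^sub>v Matrix.vec 8 (\<lambda>k. fst (pts!k) ^ 4);
          b = the (mat_inverse (W_B1 pts)) *\<^sub>v Matrix.vec 8 (\<lambda>k. fst (pts!k) ^ 3 * snd (pts!k))
      in \<forall>i j. i + j \<le> 2 \<longrightarrow>
           riesz \<beta> (mono_times i j (resid_poly (4,0) a)) = 0 \<and>
           riesz \<beta> (mono_times i j (resid_poly (3,1) b)) = 0)"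
    then have wc: "weakly_consistent \<beta>" by blast
    obtain B where B: "mat_inverse (W_B1 pts) = Some B" "W_B1 pts * B = 1\<^sub>m 8" "B * W_B1 pts = 1\<^sub>m 8" "B \<in> carrier_mat 8 8"
      using invB[OF wc] by blast
    have R: "\<forall>i j. i + j \<le> 2 \<longrightarrow>
           riesz \<beta> (mono_times i j (resid_poly (4,0) (B *\<^sub>v Matrix.vec 8 (\<lambda>k. fst (pts!k) ^ 4)))) = 0 \<and>
           riesz \<beta> (mono_times i j (resid_poly (3,1) (B *\<^sub>v Matrix.vec 8 (\<lambda>k. fst (pts!k) ^ 3 * snd (pts!k))))) = 0"
      using rhs B(1) by (simp add: Let_def)
    show "has_rep_measure \<beta>"
      by (rule converse[OF psd V D L LI Dw SP B(2,3,4)]) (use R in blast)+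
  qed
qed

end
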